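(* Let $(E,\mathcal{I}_1),\dots,(E,\mathcal{I}_k)$ be matroids on a common finite ground set $E$ with weight functions $w_i:E\to\mathbb{R}_+$, and let $\mathrm{Op}^{(1)},\mathrm{Op}^{(2)}\in\{\max,\min,\sum\}$. Let $r=\sum_{i\in[k]}\mathrm{rank}(\mathcal{I}_i)-|E|$, assumed nonnegative, and let $D=\{d_1,\dots,d_r\}$ be a set of $r$ new elements with $D\cap E=\emptyset$. For each $i\in[k]$ define $$\mathcal{I}_i'=\{D'\subseteq D\mid |D'|\le \mathrm{rank}(\mathcal{I}_i)-1\},\qquad \overline{\mathcal{I}}_i=\{I\cup D'\mid I\in\mathcal{I}_i,\ D'\in\mathcal{I}_i',\ |I\cup D'|\le \mathrm{rank}(\mathcal{I}_i)\}$$ (so $(E\cup D,\overline{\mathcal{I}}_i)$ is the $\mathrm{rank}(\mathcal{I}_i)$-truncation of the matroid union of $(E,\mathcal{I}_i)$ and the uniform matroid $(D,\mathcal{I}_i')$), and define $\overline{w}_i:E\cup D\to\mathbb{R}_+$ by $\overline{w}_i(e)=w_i(e)$ for $e\in E$, and for $e\in D$: $\overline{w}_i(e)=\min_{e'\in E}w_i(e')$ if $\mathrm{Op}^{(2)}=\max$, $\overline{w}_i(e)=\max_{e'\in E}w_i(e')$ if $\mathrm{Op}^{(2)}=\min$, and $\overline{w}_i(e)=0$ if $\mathrm{Op}^{(2)}=\sum$. Then the minimum $(\mathrm{Op}^{(1)},\mathrm{Op}^{(2)})$-value over feasible partitions of $E$ with respect to $(\mathcal{I}_i,w_i)_{i\in[k]}$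 equals the minimum $(\mathrm{Op}^{(1)},\mathrm{Op}^{(2)})$-value over feasible partitions of $E\cup D$ with respect to $(\overline{\mathcal{I}}_i,\overline{w}_i)_{i\in[k]}$.
   Context: For matroids $(E,\mathcal{I}_i)$, $i\in[k]=\{1,\dots,k\}$, a feasible partition of $E$ is a tuple $(I_1,\dots,I_k)$ of pairwise disjoint sets with $\bigcup_i I_i=E$, $I_i\neq\emptyset$ and $I_i\in\mathcal{I}_i$ for all $i$. For weights $w_i$, the $(\mathrm{Op}^{(1)},\mathrm{Op}^{(2)})$-value of a partition $(I_1,\dots,I_k)$ is $\mathrm{Op}^{(1)}_{i\in[k]}\mathrm{Op}^{(2)}_{e\in I_i}w_i(e)$ (e.g. the $(\sum,\max)$-value is $\sum_{i}\max_{e\in I_i}w_i(e)$). $\mathrm{rank}(\mathcal{I})$ denotes the common size of the bases of the matroid. Note $r\ge 0$ whenever $E$ has a feasible partition. *)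

theory Defs
  imports Complex_Main
begin

definition matroid :: "'a set \<Rightarrow> 'a set set \<Rightarrow> bool" where
  "matroid E I \<longleftrightarrow> finite E \<and> I \<subseteq> Pow E \<and> {} \<in> I
     \<and> (\<forall>X Y. X \<in> I \<and> Y \<subseteq> X \<longrightarrow> Y \<in> I)
     \<and> (\<forall>X Y. X \<in> I \<and> Y \<in> I \<and> card X < card Y \<longrightarrow> (\<exists>e \<in> Y - X. insert e X \<in> I))"

definition mrank :: "'a set set \<Rightarrow> nat" where
  "mrank I = Max (card ` I)"

datatype aggop = OpMax | OpMin | OpSum

definition opval :: "aggop \<Rightarrow> ('b \<Rightarrow> real) \<Rightarrow> 'b set \<Rightarrow> real" where
  "opval Op f A = (case Op of OpMax \<Rightarrow> Max (f ` A) | OpMin \<Rightarrow> Min (f ` A) | OpSum \<Rightarrow> sum f A)"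

definition feasible_partition :: "nat \<Rightarrow> (nat \<Rightarrow> 'a set set) \<Rightarrow> 'a set \<Rightarrow> (nat \<Rightarrow> 'a set) \<Rightarrow> bool" where
  "feasible_partition k Is X P \<longleftrightarrow>
     (\<forall>i j. i < k \<and> j < k \<and> i \<noteq> j \<longrightarrow> P i \<inter> P j = {})
     \<and> (\<Union>i<k. P i) = X
     \<and> (\<forall>i<k. P i \<noteq> {} \<and> P i \<in> Is i)
     \<and> (\<forall>i. k \<le> i \<longrightarrow> P i = {})"

definition partition_value :: "aggop \<Rightarrow> aggop \<Rightarrow> nat \<Rightarrow> (nat \<Rightarrow> 'a \<Rightarrow> real) \<Rightarrow> (nat \<Rightarrow> 'a set) \<Rightarrow> real" where
  "partition_value Op1 Op2 k w P = opval Op1 (\<lambda>i. opval Op2 (w i) (P i)) {..<k}"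

definition partition_values :: "aggop \<Rightarrow> aggop \<Rightarrow> nat \<Rightarrow> (nat \<Rightarrow> 'a set set) \<Rightarrow> (nat \<Rightarrow> 'a \<Rightarrow> real) \<Rightarrow> 'a set \<Rightarrow> real set" where
  "partition_values Op1 Op2 k Is w X = {partition_value Op1 Op2 k w P | P. feasible_partition k Is X P}"

definition ext_indep :: "'a set set \<Rightarrow> 'a set \<Rightarrow> 'a set set" where
  "ext_indep I D = {J \<union> D' | J D'. J \<in> I \<and> D' \<subseteq> D \<and> int (card D') \<le> int (mrank I) - 1
                       \<and> card (J \<union> D') \<le> mrank I}"

definition ext_weight :: "aggop \<Rightarrow> 'a set \<Rightarrow> ('a \<Rightarrow> real) \<Rightarrow> 'a \<Rightarrow> real" where
  "ext_weight Op2 E w e = (if e \<in> E then w e else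
     (case Op2 of OpMax \<Rightarrow> Min (w ` E) | OpMin \<Rightarrow> Max (w ` E) | OpSum \<Rightarrow> 0))"

end

theory Submission
  imports Defs
begin

lemma opval_cong: "(\<And>x. x \<in> A \<Longrightarrow> f x = g x) \<Longrightarrow> opval Op f A = opval Op g A"
proof -
  assume h: "\<And>x. x \<in> A \<Longrightarrow> f x = g x"
  then have "f ` A = g ` A" by (auto intro: image_cong)
  moreover have "sum f A = sum g A" using h by (rule sum.cong[OF refl])
  ultimately show ?thesis by (cases Op) (simp_all add: opval_def)
qed

lemma distribute:
  fixes k :: nat and n :: "nat \<Rightarrow> nat" and D :: "'a set"
  shows "finite D \<Longrightarrow> (\<Sum>i<k. n i) = card D \<Longrightarrow> \<exists>F. (\<forall>i<k. F i \<subseteq> D \<and> card (F i) = n i)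
     \<and> (\<forall>i<k. \<forall>j<k. i \<noteq> j \<longrightarrow> F i \<inter> F j = {}) \<and> (\<Union>i<k. F i) = D"
proof (induction k arbitrary: D)
  case 0 then show ?case by auto
next
  case (Suc k)
  have "n k \<le> card D" using Suc.prems by simp
  then obtain S where S: "S \<subseteq> D" "card S = n k" using obtain_subset_with_card_n by metis
  have fS: "finite S" using S Suc.prems finite_subset by blast
  have "(\<Sum>i<k. n i) = card (D - S)" using Suc.prems S fS by (simp add: card_Diff_subset)
  then obtain F where F: "\<forall>i<k. F i \<subseteq> D - S \<and> card (F i) = n i"
     "\<forall>i<k. \<forall>j<k. i \<noteq> j \<longrightarrow> F i \<inter> F j = {}" "(\<Union>i<k. F i) = D - S"
    using Suc.IH[of "D - S"] Suc.prems by auto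
  define G where "G i = (if i = k then S else F i)" for i
  have "\<forall>i<Suc k. G i \<subseteq> D \<and> card (G i) = n i" using F S by (auto simp: G_def less_Suc_eq)
  moreover have "\<forall>i<Suc k. \<forall>j<Suc k. i \<noteq> j \<longrightarrow> G i \<inter> G j = {}"
  proof (intro allI impI)
    fix i j assume ij: "i < Suc k" "j < Suc k" "i \<noteq> j"
    show "G i \<inter> G j = {}"
    proof (cases "i = k")
      case True then have "j < k" using ij by auto
      then show ?thesis using True F(1) by (auto simp: G_def)
    next
      case False then have i: "i < k" using ij by auto
      show ?thesis
      proof (cases "j = k")
        case True then show ?thesis using i F(1) by (auto simp: G_def)
      next
        case False then have "j < k" using ij by auto
        then show ?thesis using i ij F(2) False \<open>i \<noteq> k\<close> by (auto simp: G_def)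
      qed
    qed
  qed
  moreover have "(\<Union>i<Suc k. G i) = D"
  proof -
    have "(\<Union>i<Suc k. G i) = G k \<union> (\<Union>i<k. G i)" by (simp add: lessThan_Suc)
    also have "(\<Union>i<k. G i) = (\<Union>i<k. F i)" by (auto simp: G_def)
    finally show ?thesis using F S by (auto simp: G_def)
  qed
  ultimately show ?case by blast
qed

lemma part_val:
  assumes "finite A" "A \<subseteq> E \<union> D" "D \<inter> E = {}" "A \<inter> E \<noteq> {}" "finite E"
  shows "opval Op2 (ext_weight Op2 E f) A = opval Op2 f (A \<inter> E)"
proof (cases Op2)
  case OpSum
  let ?g = "ext_weight Op2 E f"
  have "sum ?g A = sum ?g (A \<inter> E) + sum ?g (A - E)" by (rule sum.Int_Diff[OF assms(1)])
  moreover have "sum ?g (A - E) = 0" by (rule sum.neutral) (auto simp: ext_weight_def OpSum)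
  moreover have "sum ?g (A \<inter> E) = sum f (A \<inter> E)" by (rule sum.cong) (auto simp: ext_weight_def)
  ultimately show ?thesis by (simp add: opval_def OpSum)
next
  case OpMax
  let ?g = "ext_weight Op2 E f"
  let ?M = "Max (f ` (A \<inter> E))"
  have fin: "finite (A \<inter> E)" using assms by auto
  have "Max (?g ` A) = ?M"
  proof (rule Max_eqI)
    show "finite (?g ` A)" using assms by auto
  next
    fix y assume "y \<in> ?g ` A"
    then obtain x where x: "x \<in> A" "y = ?g x" by auto
    show "y \<le> ?M"
    proof (cases "x \<in> E")
      case True then show ?thesis using x fin by (auto simp: ext_weight_def)
    next
      case False
      obtain e where e: "e \<in> A \<inter> E" using assms by auto
      have "Min (f ` E) \<le> f e" using e assms by auto
      also have "f e \<le> ?M" using e fin by auto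
      finally show ?thesis using x False by (simp add: ext_weight_def OpMax)
    qed
  next
    have "?M \<in> f ` (A \<inter> E)" using fin assms by (intro Max_in) auto
    then obtain x where "x \<in> A \<inter> E" "?M = f x" by auto
    then show "?M \<in> ?g ` A" by (auto simp: ext_weight_def intro!: image_eqI[of _ _ x])
  qed
  then show ?thesis by (simp add: opval_def OpMax)
next
  case OpMin
  let ?g = "ext_weight Op2 E f"
  let ?M = "Min (f ` (A \<inter> E))"
  have fin: "finite (A \<inter> E)" using assms by auto
  have "Min (?g ` A) = ?M"
  proof (rule Min_eqI)
    show "finite (?g ` A)" using assms by auto
  next
    fix y assume "y \<in> ?g ` A"
    then obtain x where x: "x \<in> A" "y = ?g x" by auto
    show "?M \<le> y"
    proof (cases "x \<in> E")
      case True then show ?thesis using x fin by (auto simp: ext_weight_def)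
    next
      case False
      obtain e where e: "e \<in> A \<inter> E" using assms by auto
      have "?M \<le> f e" using e fin by auto
      also have "f e \<le> Max (f ` E)" using e assms by auto
      finally show ?thesis using x False by (simp add: ext_weight_def OpMin)
    qed
  next
    have "?M \<in> f ` (A \<inter> E)" using fin assms by (intro Min_in) auto
    then obtain x where "x \<in> A \<inter> E" "?M = f x" by auto
    then show "?M \<in> ?g ` A" by (auto simp: ext_weight_def intro!: image_eqI[of _ _ x])
  qed
  then show ?thesis by (simp add: opval_def OpMin)
qed


lemma val_eq:
  assumes "\<forall>i<k. finite (Q i) \<and> Q i \<subseteq> E \<union> D \<and> Q i \<inter> E \<noteq> {}" "D \<inter> E = {}" "finite E"
  shows "partition_value Op1 Op2 k (\<lambda>i. ext_weight Op2 E (w i)) Q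
       = partition_value Op1 Op2 k w (\<lambda>i. Q i \<inter> E)"
  unfolding partition_value_def
proof (rule opval_cong)
  fix i assume "i \<in> {..<k}"
  then show "opval Op2 (ext_weight Op2 E (w i)) (Q i) = opval Op2 (w i) (Q i \<inter> E)"
    using assms by (intro part_val) auto
qed

theorem mainTheorem1:
  fixes E D :: "'a set" and k :: nat and Is :: "nat \<Rightarrow> 'a set set"
    and w :: "nat \<Rightarrow> 'a \<Rightarrow> real" and Op1 Op2 :: aggop
  assumes finE: "finite E"
    and mat: "\<forall>i<k. matroid E (Is i)"
    and wpos: "\<forall>i<k. \<forall>e\<in>E. w i e \<ge> 0"
    and rnonneg: "(\<Sum>i<k. int (mrank (Is i))) - int (card E) \<ge> 0"
    and finD: "finite D"
    and cardD: "int (card D) = (\<Sum>i<k. int (mrank (Is i))) - int (card E)"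
    and disj: "D \<inter> E = {}"
  shows "(partition_values Op1 Op2 k Is w E = {}
            \<longleftrightarrow> partition_values Op1 Op2 k (\<lambda>i. ext_indep (Is i) D)
                  (\<lambda>i. ext_weight Op2 E (w i)) (E \<union> D) = {})
       \<and> (partition_values Op1 Op2 k Is w E \<noteq> {} \<longrightarrow>
            Min (partition_values Op1 Op2 k Is w E)
          = Min (partition_values Op1 Op2 k (\<lambda>i. ext_indep (Is i) D)
                  (\<lambda>i. ext_weight Op2 E (w i)) (E \<union> D)))"
proof -
  have IsE: "\<And>i. i < k \<Longrightarrow> Is i \<subseteq> Pow E" using mat by (auto simp: matroid_def)
  have rk: "card J \<le> mrank (Is i)" if "i < k" "J \<in> Is i" for i J
  proof -
    have "finite (Is i)" using IsE[OF that(1)] finE by (meson finite_Pow_iff finite_subset)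
    then show ?thesis unfolding mrank_def using that by auto
  qed
  have "int (\<Sum>i<k. mrank (Is i)) = (\<Sum>i<k. int (mrank (Is i)))" by simp
  then have cardED: "card E + card D = (\<Sum>i<k. mrank (Is i))" using cardD by linarith
  have cardU: "card (E \<union> D) = card E + card D" using finE finD disj by (simp add: card_Un_disjoint inf_commute)
  let ?V = "partition_values Op1 Op2 k Is w E"
  let ?V' = "partition_values Op1 Op2 k (\<lambda>i. ext_indep (Is i) D) (\<lambda>i. ext_weight Op2 E (w i)) (E \<union> D)"
  have sub1: "?V' \<subseteq> ?V"
  proof
    fix v assume "v \<in> ?V'"
    then obtain Q where Q: "feasible_partition k (\<lambda>i. ext_indep (Is i) D) (E \<union> D) Q"
      and v: "v = partition_value Op1 Op2 k (\<lambda>i. ext_weight Op2 E (w i)) Q"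
      unfolding partition_values_def by auto
    have Qd: "\<forall>i<k. \<forall>j<k. i \<noteq> j \<longrightarrow> Q i \<inter> Q j = {}" and QU: "(\<Union>i<k. Q i) = E \<union> D"
      and Qi: "\<forall>i<k. Q i \<noteq> {} \<and> Q i \<in> ext_indep (Is i) D" and Qk: "\<forall>i. k \<le> i \<longrightarrow> Q i = {}"
      using Q unfolding feasible_partition_def by auto
    have Qsub: "Q i \<subseteq> E \<union> D" if "i < k" for i using QU that by auto
    have Qfin: "finite (Q i)" if "i < k" for i using Qsub[OF that] finE finD by (meson finite_UnI finite_subset)
    have decomp: "\<exists>J D'. Q i = J \<union> D' \<and> J \<in> Is i \<and> D' \<subseteq> D \<and> int (card D') \<le> int (mrank (Is i)) - 1
        \<and> card (J \<union> D') \<le> mrank (Is i)" if "i < k" for i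
    proof -
      have "Q i \<in> ext_indep (Is i) D" using Qi that by blast
      then show ?thesis unfolding ext_indep_def mem_Collect_eq by blast
    qed
    have le: "card (Q i) \<le> mrank (Is i)" if "i < k" for i using decomp[OF that] by auto
    have "(\<Sum>i<k. card (Q i)) = card (\<Union>i<k. Q i)"
      by (rule card_UN_disjoint[symmetric]) (use Qfin Qd in auto)
    also have "\<dots> = (\<Sum>i<k. mrank (Is i))" using QU cardU cardED by simp
    finally have sumeq: "(\<Sum>i<k. card (Q i)) = (\<Sum>i<k. mrank (Is i))" .
    have eqc: "card (Q i) = mrank (Is i)" if "i < k" for i
    proof (rule ccontr)
      assume "card (Q i) \<noteq> mrank (Is i)"
      then have "card (Q i) < mrank (Is i)" using le[OF that] by auto
      then have "(\<Sum>i<k. card (Q i)) < (\<Sum>i<k. mrank (Is i))"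
        by (intro sum_strict_mono_ex1) (use le that in auto)
      then show False using sumeq by simp
    qed
    have QE: "Q i \<inter> E \<noteq> {} \<and> Q i \<inter> E \<in> Is i" if ik: "i < k" for i
    proof -
      obtain J D' where J: "Q i = J \<union> D'" "J \<in> Is i" "D' \<subseteq> D" "int (card D') \<le> int (mrank (Is i)) - 1"
        using decomp[OF ik] by blast
      have "J \<subseteq> E" using IsE[OF ik] J(2) by auto
      then have eq: "Q i \<inter> E = J" using J(1,3) disj by auto
      have "J \<noteq> {}"
      proof
        assume "J = {}"
        then have "card D' = mrank (Is i)" using eqc[OF ik] J(1) by simp
        then show False using J(4) by simp
      qed
      then show ?thesis using eq J(2) by simp
    qed
    have "feasible_partition k Is E (\<lambda>i. Q i \<inter> E)"
      unfolding feasible_partition_def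
    proof (intro conjI allI impI)
      show "(\<Union>i<k. Q i \<inter> E) = E" using QU by auto
    next
      fix i j assume "i < k \<and> j < k \<and> i \<noteq> j"
      then show "Q i \<inter> E \<inter> (Q j \<inter> E) = {}" using Qd by blast
    next
      fix i assume "i < k" then show "Q i \<inter> E \<noteq> {}" using QE by blast
    next
      fix i assume "i < k" then show "Q i \<inter> E \<in> Is i" using QE by blast
    next
      fix i assume "k \<le> i" then show "Q i \<inter> E = {}" using Qk by simp
    qed
    moreover have "v = partition_value Op1 Op2 k w (\<lambda>i. Q i \<inter> E)"
    proof -
      have "\<forall>i<k. finite (Q i) \<and> Q i \<subseteq> E \<union> D \<and> Q i \<inter> E \<noteq> {}"
        using Qfin Qsub QE by simp
      then show ?thesis unfolding v using disj finE by (rule val_eq)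
    qed
    ultimately show "v \<in> ?V" unfolding partition_values_def by auto
  qed
  have sub2: "?V \<subseteq> ?V'"
  proof
    fix v assume "v \<in> ?V"
    then obtain P where P: "feasible_partition k Is E P"
      and v: "v = partition_value Op1 Op2 k w P"
      unfolding partition_values_def by auto
    have Pd: "\<forall>i<k. \<forall>j<k. i \<noteq> j \<longrightarrow> P i \<inter> P j = {}" and PU: "(\<Union>i<k. P i) = E"
      and Pi: "\<forall>i<k. P i \<noteq> {} \<and> P i \<in> Is i" and Pk: "\<forall>i. k \<le> i \<longrightarrow> P i = {}"
      using P unfolding feasible_partition_def by auto
    have Psub: "P i \<subseteq> E" if "i < k" for i using PU that by auto
    have Pfin: "finite (P i)" if "i < k" for i using Psub[OF that] finE by (meson finite_subset)
    have "(\<Sum>i<k. card (P i)) = card (\<Union>i<k. P i)"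
      by (rule card_UN_disjoint[symmetric]) (use Pfin Pd in auto)
    then have sP: "(\<Sum>i<k. card (P i)) = card E" using PU by simp
    have Ple: "card (P i) \<le> mrank (Is i)" if "i < k" for i using rk that Pi by auto
    have "(\<Sum>i<k. mrank (Is i) - card (P i)) = card D"
      using sum_subtractf_nat[of "{..<k}" "\<lambda>i. card (P i)" "\<lambda>i. mrank (Is i)"] Ple sP cardED by auto
    then have "\<exists>F. (\<forall>i<k. F i \<subseteq> D \<and> card (F i) = mrank (Is i) - card (P i))
      \<and> (\<forall>i<k. \<forall>j<k. i \<noteq> j \<longrightarrow> F i \<inter> F j = {}) \<and> (\<Union>i<k. F i) = D"
      by (rule distribute[OF finD])
    then obtain F where F: "\<forall>i<k. F i \<subseteq> D \<and> card (F i) = mrank (Is i) - card (P i)"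
      "\<forall>i<k. \<forall>j<k. i \<noteq> j \<longrightarrow> F i \<inter> F j = {}" "(\<Union>i<k. F i) = D"
      by (elim exE conjE) (intro that)
    define Q where "Q i = (if i < k then P i \<union> F i else {})" for i
    have QE: "Q i \<inter> E = P i" for i
    proof (cases "i < k")
      case True
      then have "F i \<subseteq> D" "P i \<subseteq> E" using F(1) Psub by auto
      then show ?thesis using True disj unfolding Q_def by auto
    next
      case False then show ?thesis using Pk unfolding Q_def by auto
    qed
    have Qin: "Q i \<in> ext_indep (Is i) D" if "i < k" for i
    proof -
      have fF: "finite (F i)" using F(1) that finD by (meson finite_subset)
      have pos: "card (P i) \<ge> 1" using Pi Pfin that by (simp add: Suc_le_eq card_gt_0_iff)
      have dj: "P i \<inter> F i = {}" using Psub[OF that] F(1) that disj by auto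
      have "card (P i \<union> F i) = card (P i) + card (F i)"
        using card_Un_disjoint[OF Pfin[OF that] fF dj] .
      then have c: "card (P i \<union> F i) = mrank (Is i)" using F(1) Ple[OF that] that by auto
      have "int (card (F i)) \<le> int (mrank (Is i)) - 1" using F(1) Ple[OF that] pos that by auto
      then have "Q i = P i \<union> F i \<and> P i \<in> Is i \<and> F i \<subseteq> D \<and> int (card (F i)) \<le> int (mrank (Is i)) - 1
        \<and> card (P i \<union> F i) \<le> mrank (Is i)" using that Pi F(1) c unfolding Q_def by auto
      then show ?thesis unfolding ext_indep_def by blast
    qed
    have "feasible_partition k (\<lambda>i. ext_indep (Is i) D) (E \<union> D) Q"
      unfolding feasible_partition_def
    proof (intro conjI allI impI)
      show "(\<Union>i<k. Q i) = E \<union> D" using PU F(3) by (auto simp: Q_def)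
    next
      fix i j assume ij: "i < k \<and> j < k \<and> i \<noteq> j"
      have a: "P i \<inter> P j = {}" using Pd ij by blast
      have b: "F i \<inter> F j = {}" using F(2) ij by blast
      have c: "P i \<inter> F j = {}" using Psub[of i] F(1) ij disj by blast
      have d: "F i \<inter> P j = {}" using Psub[of j] F(1) ij disj by blast
      show "Q i \<inter> Q j = {}" using a b c d ij unfolding Q_def by auto
    next
      fix i assume "i < k" then show "Q i \<noteq> {}" using Pi unfolding Q_def by auto
    next
      fix i assume "i < k" then show "Q i \<in> ext_indep (Is i) D" by (rule Qin)
    next
      fix i assume "k \<le> i" then show "Q i = {}" unfolding Q_def by auto
    qed
    moreover have "partition_value Op1 Op2 k (\<lambda>i. ext_weight Op2 E (w i)) Q = v"
    proof -
      have "partition_value Op1 Op2 k (\<lambda>i. ext_weight Op2 E (w i)) Q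
          = partition_value Op1 Op2 k w (\<lambda>i. Q i \<inter> E)"
      proof (rule val_eq)
        show "\<forall>i<k. finite (Q i) \<and> Q i \<subseteq> E \<union> D \<and> Q i \<inter> E \<noteq> {}"
        proof (intro allI impI conjI)
          fix i assume ik: "i < k"
          have fF: "finite (F i)" using F(1) ik finD by (meson finite_subset)
          show "finite (Q i)" using fF Pfin[OF ik] ik unfolding Q_def by simp
          show "Q i \<subseteq> E \<union> D" using Psub[OF ik] F(1) ik unfolding Q_def by auto
          show "Q i \<inter> E \<noteq> {}" using QE[of i] Pi ik by simp
        qed
      qed (use disj finE in auto)
      then show ?thesis using v QE by simp
    qed
    ultimately show "v \<in> ?V'" unfolding partition_values_def by auto
  qed
  from sub1 sub2 have "?V = ?V'" by blast
  then show ?thesis by simp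
qed

end
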